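(* Let $k\ge 3$ be an integer and $F$ a field admitting a primitive $(k-1)$-th root of unity with $\mathrm{char}(F)\nmid k$. Let $X$ be a finite poset, $B$ a unital associative $F$-algebra, and $\varphi:I(X,F)\to B$ an $F$-linear map with $\varphi(P_k(I(X,F)))\subseteq P_k(B)$ and $1\in\varphi(I(X,F))$. Then there exist a Jordan homomorphism $\psi:I(X,F)\to B$ and an element $u\in B$ commuting with every element of $\varphi(I(X,F))$, with $u^{k-1}=1$, such that $\varphi=u\psi$.
   Context: $I(X,F)$ is the incidence algebra of the locally finite poset $X$ over $F$ (functions $f:X\times X\to F$ vanishing unless $x\le y$, with product $(fg)(x,y)=\sum_{x\le z\le y}f(x,z)g(z,y)$). $P_k(A)=\{a: a^k=a\}$. A Jordan homomorphism $\psi:A\to B$ of associative algebras is a linear map with $\psi(a^2)=\psi(a)^2$ and $\psi(aba)=\psi(a)\psi(b)\psi(a)$ for all $a,b$. *)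

theory Defs
  imports Main
begin

definition incidence :: "('x::order \<Rightarrow> 'x \<Rightarrow> 'f::field) set" where
  "incidence = {f. \<forall>x y. \<not> x \<le> y \<longrightarrow> f x y = 0}"

definition inc_add :: "('x \<Rightarrow> 'x \<Rightarrow> 'f::field) \<Rightarrow> ('x \<Rightarrow> 'x \<Rightarrow> 'f) \<Rightarrow> 'x \<Rightarrow> 'x \<Rightarrow> 'f" where
  "inc_add f g = (\<lambda>x y. f x y + g x y)"

definition inc_smult :: "'f::field \<Rightarrow> ('x \<Rightarrow> 'x \<Rightarrow> 'f) \<Rightarrow> 'x \<Rightarrow> 'x \<Rightarrow> 'f" where
  "inc_smult c f = (\<lambda>x y. c * f x y)"

definition inc_mult :: "('x::order \<Rightarrow> 'x \<Rightarrow> 'f::field) \<Rightarrow> ('x \<Rightarrow> 'x \<Rightarrow> 'f) \<Rightarrow> 'x \<Rightarrow> 'x \<Rightarrow> 'f" where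
  "inc_mult f g = (\<lambda>x y. \<Sum>z\<in>{z. x \<le> z \<and> z \<le> y}. f x z * g z y)"

definition inc_one :: "'x::order \<Rightarrow> 'x \<Rightarrow> 'f::field" where
  "inc_one = (\<lambda>x y. if x = y then 1 else 0)"

primrec inc_pow :: "('x::order \<Rightarrow> 'x \<Rightarrow> 'f::field) \<Rightarrow> nat \<Rightarrow> 'x \<Rightarrow> 'x \<Rightarrow> 'f" where
  "inc_pow f 0 = inc_one"
| "inc_pow f (Suc n) = inc_mult f (inc_pow f n)"

definition inc_Pk :: "nat \<Rightarrow> ('x::order \<Rightarrow> 'x \<Rightarrow> 'f::field) set" where
  "inc_Pk k = {a \<in> incidence. inc_pow a k = a}"

definition Pk :: "nat \<Rightarrow> 'b::ring_1 set" where
  "Pk k = {b. b ^ k = b}"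

definition is_F_algebra :: "('f::field \<Rightarrow> 'b::ring_1 \<Rightarrow> 'b) \<Rightarrow> bool" where
  "is_F_algebra smul \<longleftrightarrow>
     (\<forall>c x y. smul c (x + y) = smul c x + smul c y) \<and>
     (\<forall>c d x. smul (c + d) x = smul c x + smul d x) \<and>
     (\<forall>c d x. smul (c * d) x = smul c (smul d x)) \<and>
     (\<forall>x. smul 1 x = x) \<and>
     (\<forall>c x y. smul c (x * y) = smul c x * y) \<and>
     (\<forall>c x y. smul c (x * y) = x * smul c y)"

text \<open>F-linear maps I(X,F) \<rightarrow> B (only their values on I(X,F) matter)\<close>
definition inc_linear :: "('f::field \<Rightarrow> 'b::ring_1 \<Rightarrow> 'b) \<Rightarrow> (('x::order \<Rightarrow> 'x \<Rightarrow> 'f) \<Rightarrow> 'b) \<Rightarrow> bool" where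
  "inc_linear smul \<phi> \<longleftrightarrow>
     (\<forall>f\<in>incidence. \<forall>g\<in>incidence. \<phi> (inc_add f g) = \<phi> f + \<phi> g) \<and>
     (\<forall>c. \<forall>f\<in>incidence. \<phi> (inc_smult c f) = smul c (\<phi> f))"

definition inc_jordan_hom :: "('f::field \<Rightarrow> 'b::ring_1 \<Rightarrow> 'b) \<Rightarrow> (('x::order \<Rightarrow> 'x \<Rightarrow> 'f) \<Rightarrow> 'b) \<Rightarrow> bool" where
  "inc_jordan_hom smul \<psi> \<longleftrightarrow> inc_linear smul \<psi> \<and>
     (\<forall>a\<in>incidence. \<psi> (inc_mult a a) = \<psi> a * \<psi> a) \<and>
     (\<forall>a\<in>incidence. \<forall>b\<in>incidence. \<psi> (inc_mult (inc_mult a b) a) = \<psi> a * \<psi> b * \<psi> a)"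

end

theory Submission
  imports Defs "HOL-Library.Function_Algebras" "HOL-Computational_Algebra.Primes"
begin


definition Eu :: "'x \<Rightarrow> 'x \<Rightarrow> 'x \<Rightarrow> 'x \<Rightarrow> 'f::field" where
  "Eu a b = (\<lambda>i j. if i = a \<and> j = b then 1 else 0)"

lemma sum_apply2: "(sum g S) i j = sum (\<lambda>p. g p i j) S"
  by (induction S rule: infinite_finite_induct) auto

lemma inc_add_eq: "inc_add f g = f + g"
  by (simp add: inc_add_def fun_eq_iff)

lemma inc_mult_add_left: "inc_mult (f + g) h = inc_mult f h + inc_mult g h"
  by (simp add: inc_mult_def fun_eq_iff sum.distrib distrib_right)
lemma inc_mult_add_right: "inc_mult h (f + g) = inc_mult h f + inc_mult h g"
  by (simp add: inc_mult_def fun_eq_iff sum.distrib distrib_left)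
lemma inc_mult_diff_left: "inc_mult (f - g) h = inc_mult f h - inc_mult g h"
  by (simp add: inc_mult_def fun_eq_iff sum_subtractf left_diff_distrib)
lemma inc_mult_diff_right: "inc_mult h (f - g) = inc_mult h f - inc_mult h g"
  by (simp add: inc_mult_def fun_eq_iff sum_subtractf right_diff_distrib)
lemma inc_mult_smult_left: "inc_mult (inc_smult c f) g = inc_smult c (inc_mult f g)"
  by (simp add: inc_mult_def inc_smult_def fun_eq_iff sum_distrib_left mult.assoc)
lemma inc_mult_smult_right: "inc_mult f (inc_smult c g) = inc_smult c (inc_mult f g)"
  by (simp add: inc_mult_def inc_smult_def fun_eq_iff sum_distrib_left mult_ac)
lemma inc_mult_zero_left: "inc_mult 0 g = 0"
  by (simp add: inc_mult_def fun_eq_iff)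
lemma inc_mult_zero_right: "inc_mult g 0 = 0"
  by (simp add: inc_mult_def fun_eq_iff)
lemma inc_mult_sum_left: "inc_mult (sum g S) h = sum (\<lambda>p. inc_mult (g p) h) S"
proof (induction S rule: infinite_finite_induct)
  case (insert x F) thus ?case by (simp only: sum.insert[OF insert(1,2)] inc_mult_add_left)
qed (simp_all add: inc_mult_def fun_eq_iff)
lemma inc_mult_sum_right: "inc_mult h (sum g S) = sum (\<lambda>p. inc_mult h (g p)) S"
proof (induction S rule: infinite_finite_induct)
  case (insert x F) thus ?case by (simp only: sum.insert[OF insert(1,2)] inc_mult_add_right)
qed (simp_all add: inc_mult_def fun_eq_iff)

lemma inc_mult_one_right:
  fixes f :: "'x::{finite,order} \<Rightarrow> 'x \<Rightarrow> 'f::field"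
  assumes "f \<in> incidence" shows "inc_mult f inc_one = f"
proof (rule ext, rule ext)
  fix x y :: 'x
  have "inc_mult f inc_one x y = (\<Sum>z\<in>{z. x \<le> z \<and> z \<le> y}. if y = z then f x y else 0)"
    unfolding inc_mult_def inc_one_def by (rule sum.cong) auto
  also have "\<dots> = f x y" using assms by (auto simp: incidence_def)
  finally show "inc_mult f inc_one x y = f x y" .
qed

lemma inc_mult_one_left:
  fixes f :: "'x::{finite,order} \<Rightarrow> 'x \<Rightarrow> 'f::field"
  assumes "f \<in> incidence" shows "inc_mult inc_one f = f"
proof (rule ext, rule ext)
  fix x y :: 'x
  have "inc_mult inc_one f x y = (\<Sum>z\<in>{z. x \<le> z \<and> z \<le> y}. if x = z then f x y else 0)"
    unfolding inc_mult_def inc_one_def by (rule sum.cong) auto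
  also have "\<dots> = f x y" using assms by (auto simp: incidence_def)
  finally show "inc_mult inc_one f x y = f x y" .
qed

lemma inc_mult_E:
  assumes "a \<le> (b::'x::{finite,order})" "c \<le> d"
  shows "inc_mult (Eu a b) (Eu c d) = (if b = c then Eu a d else (0::'x\<Rightarrow>'x\<Rightarrow>'f::field))"
proof (rule ext, rule ext)
  fix i j :: 'x
  have "inc_mult (Eu a b) (Eu c d) i j = (\<Sum>z\<in>{z. i \<le> z \<and> z \<le> j}. if b = z then (if i = a \<and> b = c \<and> j = d then (1::'f) else 0) else 0)"
    unfolding inc_mult_def Eu_def by (rule sum.cong) auto
  also have "\<dots> = (if b = c then Eu a d else 0) i j"
    using assms by (auto simp: Eu_def)
  finally show "inc_mult (Eu a b) (Eu c d) i j = (if b = c then Eu a d else (0::'x\<Rightarrow>'x\<Rightarrow>'f)) i j" .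
qed

lemma inc_mult_closed: "inc_mult f g \<in> incidence"
  unfolding incidence_def inc_mult_def
  by (auto intro!: sum.neutral dest: order_trans)

lemma incidence_add: "f \<in> incidence \<Longrightarrow> g \<in> incidence \<Longrightarrow> f + g \<in> incidence"
  by (auto simp: incidence_def)
lemma incidence_diff: "f \<in> incidence \<Longrightarrow> g \<in> incidence \<Longrightarrow> f - g \<in> incidence"
  by (auto simp: incidence_def)
lemma incidence_zero: "0 \<in> incidence"
  by (auto simp: incidence_def)
lemma incidence_smult: "f \<in> incidence \<Longrightarrow> inc_smult c f \<in> incidence"
  by (auto simp: incidence_def inc_smult_def)
lemma incidence_one: "inc_one \<in> incidence"
  by (auto simp: incidence_def inc_one_def)
lemma incidence_E: "a \<le> b \<Longrightarrow> Eu a b \<in> incidence"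
  by (auto simp: incidence_def Eu_def)
lemma incidence_sum: "(\<And>p. p \<in> S \<Longrightarrow> g p \<in> incidence) \<Longrightarrow> sum g S \<in> incidence"
  by (induction S rule: infinite_finite_induct) (auto simp: incidence_zero incidence_add)

lemma inc_decomp:
  fixes f :: "'x::{finite,order} \<Rightarrow> 'x \<Rightarrow> 'f::field"
  assumes "f \<in> incidence"
  shows "f = (\<Sum>p\<in>{p. fst p \<le> snd p}. inc_smult (f (fst p) (snd p)) (Eu (fst p) (snd p)))"
proof (rule ext, rule ext)
  fix i j :: 'x
  have "(\<Sum>p\<in>{p. fst p \<le> snd p}. inc_smult (f (fst p) (snd p)) (Eu (fst p) (snd p))) i j
     = (\<Sum>p\<in>{p. fst p \<le> snd p}. if (i, j) = p then f i j else 0)"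
    unfolding sum_apply2 inc_smult_def Eu_def by (rule sum.cong) auto
  also have "\<dots> = f i j" using assms by (auto simp: incidence_def)
  finally show "f i j = (\<Sum>p\<in>{p. fst p \<le> snd p}. inc_smult (f (fst p) (snd p)) (Eu (fst p) (snd p))) i j" by simp
qed

lemma sum_restrict_univ:
  "(\<Sum>z\<in>{z::'x::finite. P z}. g z) = (\<Sum>z\<in>UNIV. if P z then g z else 0)"
  by (simp add: sum.If_cases)

lemma inc_mult_assoc:
  fixes f g h :: "'x::{finite,order} \<Rightarrow> 'x \<Rightarrow> 'f::field"
  shows "inc_mult (inc_mult f g) h = inc_mult f (inc_mult g h)"
proof (rule ext, rule ext)
  fix i j :: 'x
  have "inc_mult (inc_mult f g) h i j
      = (\<Sum>z\<in>UNIV. \<Sum>w\<in>UNIV. if i \<le> w \<and> w \<le> z \<and> z \<le> j then f i w * g w z * h z j else 0)"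
    unfolding inc_mult_def sum_restrict_univ
  proof (rule sum.cong)
    fix z assume "z \<in> (UNIV::'x set)"
    show "(if i \<le> z \<and> z \<le> j then (\<Sum>w\<in>UNIV. if i \<le> w \<and> w \<le> z then f i w * g w z else 0) * h z j else 0) =
      (\<Sum>w\<in>UNIV. if i \<le> w \<and> w \<le> z \<and> z \<le> j then f i w * g w z * h z j else 0)"
      by (cases "i \<le> z \<and> z \<le> j") (auto simp: sum_distrib_right intro!: sum.cong sum.neutral dest: order_trans)
  qed simp
  also have "\<dots> = (\<Sum>w\<in>UNIV. \<Sum>z\<in>UNIV. if i \<le> w \<and> w \<le> z \<and> z \<le> j then f i w * g w z * h z j else 0)"
    by (rule sum.swap)
  also have "\<dots> = inc_mult f (inc_mult g h) i j"
    unfolding inc_mult_def sum_restrict_univ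
  proof (rule sum.cong)
    fix w assume "w \<in> (UNIV::'x set)"
    show "(\<Sum>z\<in>UNIV. if i \<le> w \<and> w \<le> z \<and> z \<le> j then f i w * g w z * h z j else 0) =
      (if i \<le> w \<and> w \<le> j then f i w * (\<Sum>z\<in>UNIV. if w \<le> z \<and> z \<le> j then g w z * h z j else 0) else 0)"
      by (cases "i \<le> w") (auto simp: sum_distrib_left mult.assoc intro!: sum.cong sum.neutral dest: order_trans)
  qed simp
  finally show "inc_mult (inc_mult f g) h i j = inc_mult f (inc_mult g h) i j" .
qed




lemma ofnat_ne0:
  fixes \<omega> :: "'f::field"
  assumes n2: "n \<ge> 2" and w1: "\<omega>^n = 1" and prim: "\<forall>j. 0<j \<and> j<n \<longrightarrow> \<omega>^j \<noteq> 1"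
  shows "of_nat n \<noteq> (0::'f)"
proof
  assume h: "of_nat n = (0::'f)"
  then have dv: "CHAR('f) dvd n" by (simp add: of_nat_eq_0_iff_char_dvd)
  have pos: "CHAR('f) > 0" using h n2 by (auto simp: CHAR_pos_iff intro!: exI[of _ n])
  have pr: "prime CHAR('f)" using prime_CHAR_semidom pos by blast
  obtain r where r: "n = CHAR('f) * r" using dv by blast
  have c2: "CHAR('f) \<ge> 2" using pr prime_ge_2_nat by blast
  have rpos: "r > 0" using r n2 by (cases r) auto
  have rlt: "r < n" using r c2 rpos by (metis One_nat_def Suc_1 Suc_le_eq lessI mult.commute mult_less_mono2 nat_mult_1_right order_less_le_trans)
  have "(\<omega>^r + (-1))^CHAR('f) = (\<omega>^r)^CHAR('f) + (-1)^CHAR('f)"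
    by (rule freshmans_dream[OF pr refl])
  also have "(\<omega>^r)^CHAR('f) = 1" using w1 r by (simp add: power_mult[symmetric] mult.commute)
  also have "(-1::'f)^CHAR('f) = -(1^CHAR('f))" by (rule minus_power_prime_CHAR[OF refl pr])
  finally have "(\<omega>^r - 1)^CHAR('f) = 0" by simp
  then have "\<omega>^r = 1" by simp
  with prim rpos rlt show False by blast
qed

lemma root_sum:
  fixes \<omega> :: "'f::field"
  assumes n1: "n \<ge> 1" and w1: "\<omega>^n = 1" and prim: "\<forall>j. 0<j \<and> j<n \<longrightarrow> \<omega>^j \<noteq> 1"
  shows "(\<Sum>j<n. \<omega>^(j*m)) = (if n dvd m then of_nat n else 0)"
proof (cases "n dvd m")
  case True
  then obtain q where q: "m = n * q" by blast
  have "\<And>j. \<omega>^(j*m) = 1"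
  proof -
    fix j
    have "\<omega>^(j*m) = (\<omega>^n)^(j*q)" by (simp add: q power_mult[symmetric] mult_ac)
    then show "\<omega>^(j*m) = 1" using w1 by simp
  qed
  then show ?thesis using True by simp
next
  case False
  have e: "\<And>j. \<omega>^(j*m) = (\<omega>^m)^j" by (simp add: power_mult[symmetric] mult.commute)
  have "\<omega>^m = \<omega>^(m mod n)"
  proof -
    have "\<omega>^(n * (m div n) + m mod n) = (\<omega>^n)^(m div n) * \<omega>^(m mod n)" by (simp only: power_add power_mult)
    then show ?thesis using w1 by simp
  qed
  moreover have "m mod n \<noteq> 0" using False by (simp add: dvd_eq_mod_eq_0)
  moreover have "m mod n < n" using n1 by simp
  ultimately have ne: "\<omega>^m \<noteq> 1" using prim by auto
  have "(\<omega>^m)^n = (\<omega>^n)^m" by (simp add: power_mult[symmetric] mult.commute)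
  then have "(\<omega>^m)^n = 1" using w1 by simp
  then show ?thesis using False ne by (simp add: e sum_gp_strict)
qed




context
  fixes smul :: "'f::field \<Rightarrow> 'b::ring_1 \<Rightarrow> 'b"
  assumes alg: "is_F_algebra smul"
begin

lemma sm_add_r: "smul c (x + y) = smul c x + smul c y" using alg by (simp add: is_F_algebra_def)
lemma sm_add_l: "smul (c + d) x = smul c x + smul d x" using alg by (simp add: is_F_algebra_def)
lemma sm_mult: "smul (c * d) x = smul c (smul d x)" using alg by (simp add: is_F_algebra_def)
lemma sm_one: "smul 1 x = x" using alg by (simp add: is_F_algebra_def)
lemma sm_left: "smul c (x * y) = smul c x * y" using alg unfolding is_F_algebra_def by blast
lemma sm_right: "smul c (x * y) = x * smul c y" using alg unfolding is_F_algebra_def by blast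

lemma sm_zero_l: "smul 0 x = 0"
  using sm_add_l[of 0 0 x] by simp
lemma sm_zero_r: "smul c 0 = 0"
  using sm_add_r[of c 0 0] by simp
lemma sm_neg_r: "smul c (- x) = - smul c x"
proof -
  have "smul c x + smul c (-x) = 0" using sm_add_r[of c x "-x"] sm_zero_r by simp
  then show ?thesis by (metis minus_unique)
qed
lemma sm_diff_r: "smul c (x - y) = smul c x - smul c y"
  using sm_add_r[of c x "-y"] sm_neg_r by simp
lemma sm_neg_l: "smul (- c) x = - smul c x"
proof -
  have "smul c x + smul (-c) x = 0" using sm_add_l[of c "-c" x] sm_zero_l by simp
  then show ?thesis by (metis minus_unique)
qed
lemma sm_sum_r: "smul c (sum f A) = (\<Sum>i\<in>A. smul c (f i))"
  by (induction A rule: infinite_finite_induct) (auto simp: sm_zero_r sm_add_r)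
lemma sm_sum_l: "smul (sum g A) x = (\<Sum>i\<in>A. smul (g i) x)"
  by (induction A rule: infinite_finite_induct) (auto simp: sm_zero_l sm_add_l)
lemma of_nat_sm: "of_nat m * x = smul (of_nat m) x"
  by (induction m) (auto simp: sm_zero_l sm_add_l sm_one distrib_right)
lemma sm_cancel: "c \<noteq> 0 \<Longrightarrow> smul c x = 0 \<Longrightarrow> x = 0"
  using sm_mult[of "inverse c" c x] sm_one sm_zero_r by simp
lemma two_cancel: "(2::'f) \<noteq> 0 \<Longrightarrow> x + x = y + y \<Longrightarrow> x = (y::'b)"
proof -
  assume "(2::'f) \<noteq> 0" "x + x = y + y"
  then have "smul 2 (x - y) = 0" using sm_add_l[of 1 1 "x - y"] sm_one
    by (simp add: algebra_simps)
  then show ?thesis using sm_cancel \<open>(2::'f) \<noteq> 0\<close> by fastforce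
qed

end

fun Wd :: "'b::ring_1 \<Rightarrow> 'b \<Rightarrow> nat \<Rightarrow> nat \<Rightarrow> 'b" where
  "Wd a b i 0 = (if i = 0 then 1 else 0)"
| "Wd a b i (Suc m) = a * Wd a b i m + (if i = 0 then 0 else b * Wd a b (i - 1) m)"

lemma Wd_gt: "m < i \<Longrightarrow> Wd a b i m = 0"
  by (induction m arbitrary: i) auto
lemma Wd_0: "Wd a b 0 m = a^m"
  by (induction m) auto
lemma Wd_mm: "Wd a b m m = b^m"
  by (induction m) (auto simp: Wd_gt)
lemma Wd_comm: "a * Wd a b 1 m - Wd a b 1 m * a = a^m * b - b * a^m"
proof (induction m)
  case (Suc m)
  have "a * Wd a b 1 (Suc m) - Wd a b 1 (Suc m) * a
      = a * (a * Wd a b 1 m - Wd a b 1 m * a) + a * b * a^m - b * a^m * a"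
    by (simp add: Wd_0 algebra_simps)
  also have "\<dots> = a * (a^m * b - b * a^m) + a * b * a^m - b * a^m * a"
    using Suc by simp
  also have "\<dots> = a^(Suc m) * b - b * a^(Suc m)"
    by (simp add: algebra_simps power_commutes)
  finally show ?case .
qed simp
lemma Wd_ab: "a * b = b * a \<Longrightarrow> Wd a b 1 (Suc m) = of_nat (Suc m) * (b * a^m)"
proof (induction m)
  case (Suc m)
  have "Wd a b 1 (Suc (Suc m)) = a * (of_nat (Suc m) * (b * a ^ m)) + b * a^(Suc m)"
    using Suc by (simp add: Wd_0)
  also have "a * (of_nat (Suc m) * (b * a ^ m)) = of_nat (Suc m) * (b * a^(Suc m))"
  proof -
    have "a * (of_nat (Suc m) * (b * a ^ m)) = of_nat (Suc m) * (a * (b * a ^ m))"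
      by (metis mult.assoc mult_of_nat_commute)
    also have "a * (b * a ^ m) = b * a^(Suc m)" using Suc.prems by (metis mult.assoc power_Suc)
    finally show ?thesis .
  qed
  finally show ?case by (simp add: algebra_simps)
qed (simp add: Wd_0)

context
  fixes smul :: "'f::field \<Rightarrow> 'b::ring_1 \<Rightarrow> 'b"
  assumes alg: "is_F_algebra smul"
begin

lemma Wd_expand: "(a + smul t b)^m = (\<Sum>i\<le>m. smul (t^i) (Wd a b i m))"
proof (induction m)
  case 0 thus ?case using alg by (simp add: sm_one)
next
  case (Suc m)
  have "(a + smul t b)^(Suc m) = (a + smul t b) * (\<Sum>i\<le>m. smul (t^i) (Wd a b i m))"
    using Suc by simp
  also have "\<dots> = (\<Sum>i\<le>m. smul (t^i) (a * Wd a b i m)) + (\<Sum>i\<le>m. smul (t^Suc i) (b * Wd a b i m))"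
    by (simp add: distrib_right sum_distrib_left sm_right[OF alg] sm_left[OF alg, symmetric]
          sm_mult[OF alg, symmetric] mult.commute sum.distrib)
  also have "(\<Sum>i\<le>m. smul (t^i) (a * Wd a b i m)) = (\<Sum>i\<le>Suc m. smul (t^i) (a * Wd a b i m))"
    by (simp add: Wd_gt sm_zero_r[OF alg])
  also have "(\<Sum>i\<le>m. smul (t^Suc i) (b * Wd a b i m))
     = (\<Sum>i\<le>Suc m. smul (t^i) (if i = 0 then 0 else b * Wd a b (i - 1) m))"
    by (subst sum.atMost_Suc_shift) (simp add: sm_zero_r[OF alg])
  finally show ?case
    by (simp add: sum.distrib[symmetric] sm_add_r[OF alg] del: sum.atMost_Suc)
qed

end




lemma dvd_cases_aux:
  assumes "n \<ge> (2::nat)" "i \<le> Suc n" "n dvd (i + (n - 1))"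
  shows "i = 1 \<or> i = Suc n"
proof -
  obtain q where q: "i + (n - 1) = n * q" using assms(3) by blast
  show ?thesis
  proof (cases "q = 0")
    case True thus ?thesis using q assms by simp
  next
    case False
    show ?thesis
    proof (cases "q = 1")
      case True
      then have "i + (n - 1) = n" using q by simp
      then show ?thesis using assms(1) by arith
    next
      case False2: False
      have "q \<ge> 2" using False False2 by simp
      then have "n * q \<ge> n * 2" by simp
      then have "n * 2 \<le> i + (n - 1)" using q by simp
      then show ?thesis using assms(1,2) by arith
    qed
  qed
qed

lemma orth:
  fixes smul :: "'f::field \<Rightarrow> 'b::ring_1 \<Rightarrow> 'b" and \<omega> :: 'f
  assumes alg: "is_F_algebra smul" and k: "k \<ge> 3" and w1: "\<omega>^(k-1) = 1"
    and prim: "\<forall>j. 0<j \<and> j<k-1 \<longrightarrow> \<omega>^j \<noteq> 1" and ck: "of_nat k \<noteq> (0::'f)"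
    and ak: "a^k = a" and bk: "b^k = b"
    and tk: "\<forall>j<k-1. (a + smul (\<omega>^j) b)^k = a + smul (\<omega>^j) b"
  shows "a * b = 0 \<and> b * a = 0"
proof -
  define n where "n = k - 1"
  have n2: "n \<ge> 2" and kn: "k = Suc n" using k by (auto simp: n_def)
  have cn: "of_nat n \<noteq> (0::'f)" using ofnat_ne0[OF n2] w1 prim by (simp add: n_def)
  have rs: "\<And>m. (\<Sum>j<n. \<omega>^(j*m)) = (if n dvd m then of_nat n else 0)"
    using root_sum[of n \<omega>] n2 w1 prim by (simp add: n_def)
  define W where "W i = Wd a b i k" for i
  have eqj: "\<And>j. j < n \<Longrightarrow> (\<Sum>i\<le>k. smul ((\<omega>^j)^i) (W i)) = a + smul (\<omega>^j) b"
    using tk Wd_expand[OF alg] by (simp add: W_def n_def)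
  have "(\<Sum>j<n. smul (\<omega>^(j*(n-1))) (\<Sum>i\<le>k. smul ((\<omega>^j)^i) (W i)))
      = (\<Sum>j<n. smul (\<omega>^(j*(n-1))) (a + smul (\<omega>^j) b))"
    by (rule sum.cong) (auto simp: eqj)
  moreover have "(\<Sum>j<n. smul (\<omega>^(j*(n-1))) (\<Sum>i\<le>k. smul ((\<omega>^j)^i) (W i)))
      = (\<Sum>i\<le>k. smul (\<Sum>j<n. \<omega>^(j*(i + (n-1)))) (W i))"
  proof -
    have "\<And>j i. smul (\<omega>^(j*(n-1))) (smul ((\<omega>^j)^i) (W i)) = smul (\<omega>^(j*(i + (n-1)))) (W i)"
      by (simp add: sm_mult[OF alg, symmetric] power_mult[symmetric] power_add[symmetric] algebra_simps)
    then have "(\<Sum>j<n. smul (\<omega>^(j*(n-1))) (\<Sum>i\<le>k. smul ((\<omega>^j)^i) (W i)))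
        = (\<Sum>j<n. \<Sum>i\<le>k. smul (\<omega>^(j*(i + (n-1)))) (W i))"
      by (simp add: sm_sum_r[OF alg])
    also have "\<dots> = (\<Sum>i\<le>k. \<Sum>j<n. smul (\<omega>^(j*(i + (n-1)))) (W i))"
      by (rule sum.swap)
    also have "\<dots> = (\<Sum>i\<le>k. smul (\<Sum>j<n. \<omega>^(j*(i + (n-1)))) (W i))"
      by (simp add: sm_sum_l[OF alg])
    finally show ?thesis .
  qed
  moreover have "(\<Sum>i\<le>k. smul (\<Sum>j<n. \<omega>^(j*(i + (n-1)))) (W i)) = smul (of_nat n) (W 1) + smul (of_nat n) (W k)"
  proof -
    have "(\<Sum>i\<le>k. smul (\<Sum>j<n. \<omega>^(j*(i + (n-1)))) (W i))
        = (\<Sum>i\<in>{1, k}. smul (\<Sum>j<n. \<omega>^(j*(i + (n-1)))) (W i))"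
    proof (rule sum.mono_neutral_right)
      show "\<forall>i\<in>{..k} - {1, k}. smul (\<Sum>j<n. \<omega>^(j*(i + (n-1)))) (W i) = 0"
      proof
        fix i assume i: "i \<in> {..k} - {1, k}"
        have nd: "\<not> n dvd (i + (n - 1))" using dvd_cases_aux[OF n2, of i] i kn by auto
        have "(\<Sum>j<n. \<omega>^(j*(i + (n-1)))) = 0"
          by (subst rs) (simp only: if_not_P[OF nd])
        then show "smul (\<Sum>j<n. \<omega>^(j*(i + (n-1)))) (W i) = 0"
          by (simp add: sm_zero_l[OF alg])
      qed
    qed (use kn in auto)
    also have "\<dots> = smul (of_nat n) (W 1) + smul (of_nat n) (W k)"
      using kn n2 by (simp add: rs)
    finally show ?thesis .
  qed
  moreover have "(\<Sum>j<n. smul (\<omega>^(j*(n-1))) (a + smul (\<omega>^j) b)) = smul (of_nat n) b"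
  proof -
    have "\<And>j. smul (\<omega>^(j*(n-1))) (a + smul (\<omega>^j) b) = smul (\<omega>^(j*(n-1))) a + smul (\<omega>^(j*n)) b"
    proof -
      fix j
      have "\<omega>^(j*(n-1)) * \<omega>^j = \<omega>^(j*n)"
      proof -
        have "j*(n-1) + j = j*n" using n2 by (cases n) auto
        then show ?thesis by (metis power_add)
      qed
      then show "smul (\<omega>^(j*(n-1))) (a + smul (\<omega>^j) b) = smul (\<omega>^(j*(n-1))) a + smul (\<omega>^(j*n)) b"
        by (simp add: sm_add_r[OF alg] sm_mult[OF alg, symmetric])
    qed
    then have "(\<Sum>j<n. smul (\<omega>^(j*(n-1))) (a + smul (\<omega>^j) b))
        = smul (\<Sum>j<n. \<omega>^(j*(n-1))) a + smul (\<Sum>j<n. \<omega>^(j*n)) b"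
      by (simp add: sum.distrib sm_sum_l[OF alg])
    also have "\<dots> = smul (of_nat n) b"
    proof -
      have "\<not> n dvd (n - 1)"
      proof
        assume "n dvd (n - 1)"
        then have "n \<le> n - 1" using n2 by (intro dvd_imp_le) auto
        then show False using n2 by simp
      qed
      then show ?thesis by (simp add: rs sm_zero_l[OF alg])
    qed
    finally show ?thesis .
  qed
  ultimately have "smul (of_nat n) (W 1) + smul (of_nat n) (W k) = smul (of_nat n) b" by simp
  moreover have "W k = b" using bk by (simp add: W_def Wd_mm)
  ultimately have "smul (of_nat n) (W 1) = 0" by simp
  then have W1: "W 1 = 0" using sm_cancel[OF alg cn] by blast
  have "a * b = b * a" using Wd_comm[of a b k] W1 ak by (simp add: W_def)
  then have "W 1 = of_nat k * (b * a^n)" using Wd_ab[of a b n] kn by (simp add: W_def)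
  then have "smul (of_nat k) (b * a^n) = 0" using W1 by (simp add: of_nat_sm[OF alg])
  then have ban: "b * a^n = 0" using sm_cancel[OF alg ck] by blast
  have "b * a = b * a^n * a" using ak kn by (metis mult.assoc power_Suc2)
  then have "b * a = 0" using ban by simp
  with \<open>a * b = b * a\<close> show ?thesis by simp
qed




lemma inc_smult_zero: "inc_smult c 0 = 0"
  by (simp add: inc_smult_def fun_eq_iff)
lemma inc_smult_zero_l: "inc_smult 0 f = 0"
  by (simp add: inc_smult_def fun_eq_iff)
lemma inc_smult_m1: "inc_smult (-1) f = - f"
  by (simp add: inc_smult_def fun_eq_iff)

lemmas incsimps = inc_mult_add_left inc_mult_add_right inc_mult_diff_left inc_mult_diff_right
  inc_mult_zero_left inc_mult_zero_right

definition jp :: "'b::ring \<Rightarrow> 'b \<Rightarrow> 'b" where "jp x y = x * y + y * x"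

lemma idem_E: "inc_mult (Eu x x) (Eu x x) = (Eu x x :: 'x::{finite,order} \<Rightarrow> 'x \<Rightarrow> 'f::field)"
  by (simp add: inc_mult_E)

lemma idem_E2: "x \<noteq> y \<Longrightarrow> inc_mult (Eu x x + Eu y y) (Eu x x + Eu y y) = (Eu x x + Eu y y :: 'x::{finite,order} \<Rightarrow> 'x \<Rightarrow> 'f::field)"
  by (simp add: incsimps inc_mult_E; use less_imp_neq order.strict_trans in blast)

lemma idem_E3: "x < y \<Longrightarrow> inc_mult (Eu x x + Eu x y) (Eu x x + Eu x y) = (Eu x x + Eu x y :: 'x::{finite,order} \<Rightarrow> 'x \<Rightarrow> 'f::field)"
  by (simp add: incsimps inc_mult_E; use less_imp_neq order.strict_trans in blast)
lemma idem_E3m: "x < y \<Longrightarrow> inc_mult (Eu x x - Eu x y) (Eu x x - Eu x y) = (Eu x x - Eu x y :: 'x::{finite,order} \<Rightarrow> 'x \<Rightarrow> 'f::field)"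
  by (simp add: incsimps inc_mult_E; use less_imp_neq order.strict_trans in blast)
lemma idem_E3': "x < y \<Longrightarrow> inc_mult (Eu y y + Eu x y) (Eu y y + Eu x y) = (Eu y y + Eu x y :: 'x::{finite,order} \<Rightarrow> 'x \<Rightarrow> 'f::field)"
  by (simp add: incsimps inc_mult_E; use less_imp_neq order.strict_trans in blast)
lemma idem_E3m': "x < y \<Longrightarrow> inc_mult (Eu y y - Eu x y) (Eu y y - Eu x y) = (Eu y y - Eu x y :: 'x::{finite,order} \<Rightarrow> 'x \<Rightarrow> 'f::field)"
  by (simp add: incsimps inc_mult_E; use less_imp_neq order.strict_trans in blast)
lemma idem_E4: "x < y \<Longrightarrow> z \<noteq> x \<Longrightarrow> z \<noteq> y \<Longrightarrow> inc_mult (Eu z z + Eu x x + Eu x y) (Eu z z + Eu x x + Eu x y) = (Eu z z + Eu x x + Eu x y :: 'x::{finite,order} \<Rightarrow> 'x \<Rightarrow> 'f::field)"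
  by (simp add: incsimps inc_mult_E; use less_imp_neq order.strict_trans in blast)
lemma idem_E5: "x < y \<Longrightarrow> x < w \<Longrightarrow> y \<noteq> w \<Longrightarrow> inc_mult (Eu x x + Eu x y + Eu x w) (Eu x x + Eu x y + Eu x w) = (Eu x x + Eu x y + Eu x w :: 'x::{finite,order} \<Rightarrow> 'x \<Rightarrow> 'f::field)"
  by (simp add: incsimps inc_mult_E; use less_imp_neq order.strict_trans in blast)
lemma idem_E6: "x < y \<Longrightarrow> z < y \<Longrightarrow> x \<noteq> z \<Longrightarrow> inc_mult (Eu y y + Eu x y + Eu z y) (Eu y y + Eu x y + Eu z y) = (Eu y y + Eu x y + Eu z y :: 'x::{finite,order} \<Rightarrow> 'x \<Rightarrow> 'f::field)"
  by (simp add: incsimps inc_mult_E; use less_imp_neq order.strict_trans in blast)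
lemma idem_E7: "x < y \<Longrightarrow> z < w \<Longrightarrow> x \<noteq> z \<Longrightarrow> y \<noteq> w \<Longrightarrow> y \<noteq> z \<Longrightarrow> w \<noteq> x \<Longrightarrow>
   inc_mult (Eu x x + Eu x y + Eu z z + Eu z w) (Eu x x + Eu x y + Eu z z + Eu z w) = (Eu x x + Eu x y + Eu z z + Eu z w :: 'x::{finite,order} \<Rightarrow> 'x \<Rightarrow> 'f::field)"
  by (simp add: incsimps inc_mult_E; use less_imp_neq order.strict_trans in blast)
lemma idem_E8: "x < y \<Longrightarrow> y < w \<Longrightarrow>
   inc_mult (Eu x x + Eu w w + Eu x y + Eu y w - Eu x w) (Eu x x + Eu w w + Eu x y + Eu y w - Eu x w) = (Eu x x + Eu w w + Eu x y + Eu y w - Eu x w :: 'x::{finite,order} \<Rightarrow> 'x \<Rightarrow> 'f::field)"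
  by (simp add: incsimps inc_mult_E; use less_imp_neq order.strict_trans in blast)




lemma inc_smult_add: "inc_smult c (f + g) = inc_smult c f + inc_smult c g"
  by (simp add: inc_smult_def fun_eq_iff distrib_left)

context
  fixes smul :: "'f::field \<Rightarrow> 'b::ring_1 \<Rightarrow> 'b" and T :: "('x::{finite,order} \<Rightarrow> 'x \<Rightarrow> 'f) \<Rightarrow> 'b"
  assumes alg: "is_F_algebra smul" and lin: "inc_linear smul T"
begin

lemma lin_add: "f \<in> incidence \<Longrightarrow> g \<in> incidence \<Longrightarrow> T (f + g) = T f + T g"
  using lin by (simp add: inc_linear_def inc_add_eq)
lemma lin_smult: "f \<in> incidence \<Longrightarrow> T (inc_smult c f) = smul c (T f)"
  using lin by (simp add: inc_linear_def)
lemma lin_zero: "T 0 = 0"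
  using lin_smult[of 0 0] incidence_zero inc_smult_zero_l sm_zero_l[OF alg] by metis
lemma lin_neg: "f \<in> incidence \<Longrightarrow> T (- f) = - T f"
  using lin_smult[of f "-1"] inc_smult_m1 sm_neg_l[OF alg] sm_one[OF alg] by metis
lemma lin_diff: "f \<in> incidence \<Longrightarrow> g \<in> incidence \<Longrightarrow> T (f - g) = T f - T g"
proof -
  assume f: "f \<in> incidence" and g: "g \<in> incidence"
  have "-g \<in> incidence" using g by (auto simp: incidence_def)
  then show ?thesis using lin_add[OF f] lin_neg[OF g] by (metis diff_conv_add_uminus)
qed
lemma lin_sum: "(\<And>p. p \<in> S \<Longrightarrow> g p \<in> incidence) \<Longrightarrow> T (sum g S) = (\<Sum>p\<in>S. T (g p))"
proof (induction S rule: infinite_finite_induct)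
  case (insert x F)
  have s: "sum g F \<in> incidence" using insert by (auto intro!: incidence_sum)
  have "T (sum g (insert x F)) = T (g x + sum g F)" by (simp only: sum.insert[OF insert(1,2)])
  also have "\<dots> = T (g x) + T (sum g F)" using s insert.prems by (intro lin_add) auto
  also have "\<dots> = T (g x) + (\<Sum>p\<in>F. T (g p))" using insert.IH insert.prems by simp
  finally show ?case by (simp only: sum.insert[OF insert(1,2)])
qed (simp_all add: lin_zero)

lemma span_zero:
  assumes "\<And>x y. x \<le> y \<Longrightarrow> T (Eu x y) = 0" and a: "a \<in> incidence"
  shows "T a = 0"
proof -
  have "T a = T (\<Sum>p\<in>{p. fst p \<le> snd p}. inc_smult (a (fst p) (snd p)) (Eu (fst p) (snd p)))"
    using inc_decomp[OF a] by simp
  also have "\<dots> = (\<Sum>p\<in>{p. fst p \<le> snd p}. T (inc_smult (a (fst p) (snd p)) (Eu (fst p) (snd p))))"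
    by (rule lin_sum) (auto intro: incidence_smult incidence_E)
  also have "\<dots> = 0"
    by (rule sum.neutral) (auto simp: lin_smult incidence_E assms(1) sm_zero_r[OF alg])
  finally show ?thesis .
qed

lemma span_idem_zero:
  assumes h: "\<And>e. e \<in> incidence \<Longrightarrow> inc_mult e e = e \<Longrightarrow> T e = 0" and a: "a \<in> incidence"
  shows "T a = 0"
proof (rule span_zero[OF _ a])
  fix x y :: 'x assume xy: "x \<le> y"
  show "T (Eu x y) = 0"
  proof (cases "x = y")
    case True thus ?thesis using h[OF incidence_E] idem_E by blast
  next
    case False
    then have lt: "x < y" using xy by simp
    have "T (Eu x x + Eu x y) = 0"
      using h[OF incidence_add[OF incidence_E incidence_E]] idem_E3[OF lt] xy by blast
    moreover have "T (Eu x x + Eu x y) = T (Eu x x) + T (Eu x y)"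
      using xy by (simp add: lin_add incidence_E)
    moreover have "T (Eu x x) = 0" using h[OF incidence_E] idem_E by blast
    ultimately show ?thesis by simp
  qed
qed

end

lemma lin_UV:
  assumes alg: "is_F_algebra smul" and lin: "inc_linear smul \<phi>"
  shows "inc_linear smul (\<lambda>a. U * \<phi> a - \<phi> a * V)"
  using lin unfolding inc_linear_def
  by (auto simp: algebra_simps sm_diff_r[OF alg] sm_right[OF alg, symmetric] sm_left[OF alg, symmetric])

lemma sq_add: "(X + Y) * (X + Y) = X * X + Y * Y + jp X (Y::'b::ring)"
  by (simp add: jp_def algebra_simps)
lemma sq_diff: "(X - Y) * (X - Y) = X * X + Y * Y - jp X (Y::'b::ring)"
  by (simp add: jp_def algebra_simps)
lemma jp_add_l: "jp (X + Y) Z = jp X Z + jp Y (Z::'b::ring)"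
  by (simp add: jp_def algebra_simps)
lemma jp_add_r: "jp Z (X + Y) = jp Z X + jp Z (Y::'b::ring)"
  by (simp add: jp_def algebra_simps)
lemma jp_diff_l: "jp (X - Y) Z = jp X Z - jp Y (Z::'b::ring)"
  by (simp add: jp_def algebra_simps)
lemma jp_diff_r: "jp Z (X - Y) = jp Z X - jp Z (Y::'b::ring)"
  by (simp add: jp_def algebra_simps)
lemma jp_comm: "jp X Y = jp Y (X::'b::ring)"
  by (simp add: jp_def algebra_simps)
lemmas jpsimps = sq_add sq_diff jp_add_l jp_add_r jp_diff_l jp_diff_r




lemma sq4: "(a+b+c+d)*(a+b+c+d) = a*a+b*b+c*c+d*d + jp a b + jp a c + jp a d + jp b c + jp b d + jp c (d::'b::ring)"
  by (simp add: jp_def algebra_simps)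
lemma sq5: "(a+b+c+d-e)*(a+b+c+d-e) = a*a+b*b+c*c+d*d+e*e + jp a b + jp a c + jp a d + jp b c + jp b d + jp c d
   - jp a e - jp b e - jp c e - jp d (e::'b::ring)"
  by (simp add: jp_def algebra_simps)
lemma alg7:
  fixes Px A Pz C :: "'b::ring_1"
  assumes "Px * Px = Px" "A * A = 0" "Pz*Pz = Pz" "C*C = 0" "jp Px A = A" "jp Px Pz = 0" "jp Px C = 0" "jp A Pz = 0" "jp Pz C = C"
   and h: "(Px + A + Pz + C) * (Px + A + Pz + C) = Px + A + Pz + C"
  shows "jp A C = 0"
proof -
  have "Px + 0 + Pz + 0 + A + 0 + 0 + 0 + jp A C + C = Px + A + Pz + C"
    using h unfolding sq4 assms(1-9) .
  then show ?thesis by (simp add: algebra_simps)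
qed
lemma alg8:
  fixes Px Pw A C D :: "'b::ring_1"
  assumes "Px * Px = Px" "Pw * Pw = Pw" "A * A = 0" "C*C = 0" "D * D = 0"
    "jp Px Pw = 0" "jp Px A = A" "jp Px C = 0" "jp Pw A = 0" "jp Pw C = C" "jp Px D = D" "jp Pw D = D"
    "jp A D = 0" "jp C D = 0"
   and h: "(Px + Pw + A + C - D) * (Px + Pw + A + C - D) = Px + Pw + A + C - D"
  shows "jp A C = D"
proof -
  have "Px + Pw + 0 + 0 + 0 + 0 + A + 0 + 0 + C + jp A C - D - D - 0 - 0 = Px + Pw + A + C - D"
    using h unfolding sq5 assms(1-14) .
  then show ?thesis by (simp add: algebra_simps)
qed

context
  fixes smul :: "'f::field \<Rightarrow> 'b::ring_1 \<Rightarrow> 'b" and \<psi> :: "('x::{finite,order} \<Rightarrow> 'x \<Rightarrow> 'f) \<Rightarrow> 'b"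
  assumes alg: "is_F_algebra smul" and two: "(2::'f) \<noteq> 0" and lin: "inc_linear smul \<psi>"
    and idem0: "\<forall>e\<in>incidence. inc_mult e e = e \<longrightarrow> \<psi> e * \<psi> e = \<psi> e"
begin

lemma idem: "e \<in> incidence \<Longrightarrow> inc_mult e e = e \<Longrightarrow> \<psi> e * \<psi> e = \<psi> e"
  using idem0 by blast

lemmas linexp = lin_add[OF alg lin] lin_diff[OF alg lin] incidence_add incidence_diff incidence_E less_imp_le

lemma F1: "\<psi> (Eu x x) * \<psi> (Eu x x) = \<psi> (Eu x x)"
  using idem[OF incidence_E idem_E] by simp

lemma F2: "x \<noteq> y \<Longrightarrow> jp (\<psi> (Eu x x)) (\<psi> (Eu y y)) = 0"
  using idem[OF _ idem_E2, of x y] by (simp add: linexp jpsimps F1)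

lemma F3: assumes "x < y"
  shows "\<psi> (Eu x y) * \<psi> (Eu x y) = 0" "jp (\<psi> (Eu x x)) (\<psi> (Eu x y)) = \<psi> (Eu x y)"
    "jp (\<psi> (Eu y y)) (\<psi> (Eu x y)) = \<psi> (Eu x y)"
proof -
  have e1: "\<psi> (Eu x y) * \<psi> (Eu x y) + jp (\<psi> (Eu x x)) (\<psi> (Eu x y)) = \<psi> (Eu x y)"
    using idem[OF _ idem_E3[OF assms]] assms by (simp add: linexp jpsimps F1 add.assoc)
  have e2: "\<psi> (Eu x y) * \<psi> (Eu x y) - jp (\<psi> (Eu x x)) (\<psi> (Eu x y)) = - \<psi> (Eu x y)"
    using idem[OF _ idem_E3m[OF assms]] assms by (simp add: linexp jpsimps F1 add_diff_eq[symmetric] diff_diff_eq2)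
  have "\<psi> (Eu x y) * \<psi> (Eu x y) + \<psi> (Eu x y) * \<psi> (Eu x y)
     = (\<psi> (Eu x y) * \<psi> (Eu x y) + jp (\<psi> (Eu x x)) (\<psi> (Eu x y))) + (\<psi> (Eu x y) * \<psi> (Eu x y) - jp (\<psi> (Eu x x)) (\<psi> (Eu x y)))"
    by (simp add: algebra_simps)
  also have "\<dots> = \<psi> (Eu x y) + - \<psi> (Eu x y)" unfolding e1 e2 ..
  finally have "\<psi> (Eu x y) * \<psi> (Eu x y) + \<psi> (Eu x y) * \<psi> (Eu x y) = 0 + 0" by simp
  then show sq: "\<psi> (Eu x y) * \<psi> (Eu x y) = 0" using two_cancel[OF alg two] by blast
  show "jp (\<psi> (Eu x x)) (\<psi> (Eu x y)) = \<psi> (Eu x y)" using e1 sq by simp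
  have e3: "\<psi> (Eu x y) * \<psi> (Eu x y) + jp (\<psi> (Eu y y)) (\<psi> (Eu x y)) = \<psi> (Eu x y)"
    using idem[OF _ idem_E3'[OF assms]] assms by (simp add: linexp jpsimps F1 add.assoc)
  then show "jp (\<psi> (Eu y y)) (\<psi> (Eu x y)) = \<psi> (Eu x y)" using sq by simp
qed

lemma F4: assumes "x < y" "z \<noteq> x" "z \<noteq> y" shows "jp (\<psi> (Eu z z)) (\<psi> (Eu x y)) = 0"
  using idem[OF _ idem_E4[OF assms]] assms F2[of z x] F3[OF assms(1)] by (simp add: linexp jpsimps F1)

lemma F5: assumes "x < y" "x < w" "y \<noteq> w" shows "jp (\<psi> (Eu x y)) (\<psi> (Eu x w)) = 0"
  using idem[OF _ idem_E5[OF assms]] assms F3[OF assms(1)] F3[OF assms(2)] by (simp add: linexp jpsimps F1)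

lemma F6: assumes "x < y" "z < y" "x \<noteq> z" shows "jp (\<psi> (Eu x y)) (\<psi> (Eu z y)) = 0"
  using idem[OF _ idem_E6[OF assms]] assms F3[OF assms(1)] F3[OF assms(2)] by (simp add: linexp jpsimps F1)

lemma F7: assumes "x < y" "z < w" "x \<noteq> z" "y \<noteq> w" "y \<noteq> z" "w \<noteq> x"
  shows "jp (\<psi> (Eu x y)) (\<psi> (Eu z w)) = 0"
proof -
  have a: "jp (\<psi> (Eu x x)) (\<psi> (Eu z w)) = 0" using F4[of z w x] assms by auto
  have b: "jp (\<psi> (Eu x y)) (\<psi> (Eu z z)) = 0" using F4[of x y z] assms jp_comm by metis
  have c: "jp (\<psi> (Eu x x)) (\<psi> (Eu z z)) = 0" using F2[of x z] assms by auto
  have inc: "Eu x x + Eu x y + Eu z z + Eu z w \<in> incidence" using assms by (simp add: linexp)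
  have L: "\<psi> (Eu x x + Eu x y + Eu z z + Eu z w) = \<psi> (Eu x x) + \<psi> (Eu x y) + \<psi> (Eu z z) + \<psi> (Eu z w)"
    using assms by (simp add: linexp)
  have h: "(\<psi> (Eu x x) + \<psi> (Eu x y) + \<psi> (Eu z z) + \<psi> (Eu z w)) * (\<psi> (Eu x x) + \<psi> (Eu x y) + \<psi> (Eu z z) + \<psi> (Eu z w))
     = \<psi> (Eu x x) + \<psi> (Eu x y) + \<psi> (Eu z z) + \<psi> (Eu z w)"
    using idem[OF inc idem_E7[OF assms]] unfolding L .
  show ?thesis
    by (rule alg7[OF F1 F3(1)[OF assms(1)] F1 F3(1)[OF assms(2)] F3(2)[OF assms(1)] c a b F3(2)[OF assms(2)] h])
qed

lemma F8: assumes xy: "x < y" and yw: "y < w" shows "jp (\<psi> (Eu x y)) (\<psi> (Eu y w)) = \<psi> (Eu x w)"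
proof -
  have xw: "x < w" using xy yw by simp
  have a: "jp (\<psi> (Eu w w)) (\<psi> (Eu x y)) = 0" using F4[of x y w] xy yw by auto
  have b: "jp (\<psi> (Eu x x)) (\<psi> (Eu y w)) = 0" using F4[of y w x] xy yw by auto
  have c: "jp (\<psi> (Eu x x)) (\<psi> (Eu w w)) = 0" using F2[of x w] xw by auto
  have d: "jp (\<psi> (Eu x y)) (\<psi> (Eu x w)) = 0" using F5[of x y w] xy xw yw by auto
  have e: "jp (\<psi> (Eu y w)) (\<psi> (Eu x w)) = 0" using F6[of y w x] xy xw yw by auto
  have f: "jp (\<psi> (Eu w w)) (\<psi> (Eu x w)) = \<psi> (Eu x w)" "jp (\<psi> (Eu x x)) (\<psi> (Eu x w)) = \<psi> (Eu x w)"
     "\<psi> (Eu x w) * \<psi> (Eu x w) = 0" using F3[OF xw] by auto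
  have inc: "Eu x x + Eu w w + Eu x y + Eu y w - Eu x w \<in> incidence" using xy yw xw by (simp add: linexp)
  have L: "\<psi> (Eu x x + Eu w w + Eu x y + Eu y w - Eu x w) = \<psi> (Eu x x) + \<psi> (Eu w w) + \<psi> (Eu x y) + \<psi> (Eu y w) - \<psi> (Eu x w)"
    using xy yw xw by (simp add: linexp)
  have h: "(\<psi> (Eu x x) + \<psi> (Eu w w) + \<psi> (Eu x y) + \<psi> (Eu y w) - \<psi> (Eu x w)) * (\<psi> (Eu x x) + \<psi> (Eu w w) + \<psi> (Eu x y) + \<psi> (Eu y w) - \<psi> (Eu x w))
     = \<psi> (Eu x x) + \<psi> (Eu w w) + \<psi> (Eu x y) + \<psi> (Eu y w) - \<psi> (Eu x w)"
    using idem[OF inc idem_E8[OF xy yw]] unfolding L .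
  show ?thesis
    by (rule alg8[OF F1 F1 F3(1)[OF xy] F3(1)[OF yw] f(3) c F3(2)[OF xy] b a F3(3)[OF yw] f(2) f(1) d e h])
qed

lemma psi0: "\<psi> 0 = 0" by (rule lin_zero[OF alg lin])

lemma S1_diag: assumes "x < y" "z \<noteq> x" "z \<noteq> y" shows "jp (\<psi> (Eu x y)) (\<psi> (Eu z z)) = 0"
  using F4[OF assms] jp_comm by metis

lemma S1: assumes xy: "x \<le> y" and zw: "z \<le> w"
  shows "\<psi> (inc_mult (Eu x y) (Eu z w) + inc_mult (Eu z w) (Eu x y)) = jp (\<psi> (Eu x y)) (\<psi> (Eu z w))"
proof (cases "x = y")
  case xy': True
  show ?thesis
  proof (cases "z = w")
    case True
    show ?thesis
    proof (cases "x = z")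
      case True
      from xy' True \<open>z = w\<close> have e: "y = x" "z = x" "w = x" by auto
      have l: "\<psi> (Eu x x + Eu x x) = \<psi> (Eu x x) + \<psi> (Eu x x)"
        by (rule lin_add[OF alg lin incidence_E[OF order.refl] incidence_E[OF order.refl]])
      show ?thesis unfolding e idem_E l jp_def F1 ..
    next
      case False
      then show ?thesis using xy' \<open>z = w\<close> by (simp add: inc_mult_E psi0 F2)
    qed
  next
    case False
    then have zw': "z < w" using zw by simp
    show ?thesis
    proof (cases "x = z")
      case True
      then show ?thesis using xy' zw' F3[OF zw'] less_imp_neq[OF zw'] by (simp add: inc_mult_E)
    next
      case False
      show ?thesis
      proof (cases "x = w")
        case True
        then show ?thesis using xy' zw' F3[OF zw'] less_imp_neq[OF zw'] by (simp add: inc_mult_E)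
      next
        case False
        then show ?thesis using xy' zw' \<open>x \<noteq> z\<close> F4[OF zw'] by (simp add: inc_mult_E psi0)
      qed
    qed
  qed
next
  case False
  then have xy': "x < y" using xy by simp
  show ?thesis
  proof (cases "z = w")
    case True
    show ?thesis
    proof (cases "z = x")
      case True
      have zx: "z = x" "w = x" using True \<open>z = w\<close> by auto
      have eq: "inc_mult (Eu x y) (Eu x x) + inc_mult (Eu x x) (Eu x y) = Eu x y"
        using xy' less_imp_neq[OF xy'] by (simp add: inc_mult_E)
      show ?thesis unfolding zx eq using F3(2)[OF xy'] jp_comm[of "\<psi> (Eu x y)" "\<psi> (Eu x x)"] by simp
    next
      case False
      show ?thesis
      proof (cases "z = y")
        case True
        have zy: "z = y" "w = y" using True \<open>z = w\<close> by auto
        have eq: "inc_mult (Eu x y) (Eu y y) + inc_mult (Eu y y) (Eu x y) = Eu x y"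
          using xy' less_imp_neq[OF xy'] by (simp add: inc_mult_E)
        show ?thesis unfolding zy eq using F3(3)[OF xy'] jp_comm[of "\<psi> (Eu x y)" "\<psi> (Eu y y)"] by simp
      next
        case False
        then show ?thesis using xy' \<open>z = w\<close> \<open>z \<noteq> x\<close> S1_diag[OF xy'] by (simp add: inc_mult_E psi0)
      qed
    qed
  next
    case False
    then have zw': "z < w" using zw by simp
    show ?thesis
    proof (cases "y = z")
      case True
      then have "x \<noteq> w" using xy' zw' by auto
      then show ?thesis using True xy' zw' F8[of x y w] by (simp add: inc_mult_E)
    next
      case yz: False
      show ?thesis
      proof (cases "w = x")
        case True
        then show ?thesis using yz xy' zw' F8[of z x y] jp_comm[of "\<psi> (Eu x y)" "\<psi> (Eu z w)"] by (simp add: inc_mult_E)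
      next
        case wx: False
        have prod0: "inc_mult (Eu x y) (Eu z w) + inc_mult (Eu z w) (Eu x y) = 0"
          using yz wx xy zw by (simp add: inc_mult_E)
        have "jp (\<psi> (Eu x y)) (\<psi> (Eu z w)) = 0"
        proof (cases "x = z")
          case True
          show ?thesis
          proof (cases "y = w")
            case True
            then show ?thesis using \<open>x = z\<close> F3[OF xy'] by (simp add: jp_def)
          next
            case False
            then show ?thesis using \<open>x = z\<close> F5[of x y w] xy' zw' by simp
          qed
        next
          case False
          show ?thesis
          proof (cases "y = w")
            case True
            then show ?thesis using \<open>x \<noteq> z\<close> F6[of x y z] xy' zw' by simp
          next
            case False
            then show ?thesis using \<open>x \<noteq> z\<close> yz wx F7[OF xy' zw'] by simp
          qed
        qed
        then show ?thesis unfolding prod0 psi0 by simp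
      qed
    qed
  qed
qed


lemma jp_smul: "jp (smul c X) Y = smul c (jp X Y)"
  by (simp add: jp_def sm_add_r[OF alg] sm_left[OF alg, symmetric] sm_right[OF alg, symmetric])

lemma Jlin: assumes b: "b \<in> incidence"
  shows "inc_linear smul (\<lambda>a. \<psi> (inc_mult a b + inc_mult b a) - jp (\<psi> a) (\<psi> b))"
  unfolding inc_linear_def
proof (intro conjI ballI allI)
  fix f g :: "'x \<Rightarrow> 'x \<Rightarrow> 'f" assume f: "f \<in> incidence" and g: "g \<in> incidence"
  have e: "inc_mult (inc_add f g) b + inc_mult b (inc_add f g) = (inc_mult f b + inc_mult b f) + (inc_mult g b + inc_mult b g)"
    by (simp add: inc_add_eq inc_mult_add_left inc_mult_add_right algebra_simps)
  show "\<psi> (inc_mult (inc_add f g) b + inc_mult b (inc_add f g)) - jp (\<psi> (inc_add f g)) (\<psi> b) =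
        \<psi> (inc_mult f b + inc_mult b f) - jp (\<psi> f) (\<psi> b) + (\<psi> (inc_mult g b + inc_mult b g) - jp (\<psi> g) (\<psi> b))"
  proof -
    have h1: "\<psi> (inc_mult (inc_add f g) b + inc_mult b (inc_add f g)) = \<psi> (inc_mult f b + inc_mult b f) + \<psi> (inc_mult g b + inc_mult b g)"
      unfolding e by (rule lin_add[OF alg lin]) (auto intro: incidence_add inc_mult_closed)
    have h2: "\<psi> (inc_add f g) = \<psi> f + \<psi> g" using f g lin unfolding inc_linear_def by blast
    show ?thesis unfolding h1 h2 jp_add_l by (simp add: algebra_simps)
  qed
next
  fix c :: 'f and f :: "'x \<Rightarrow> 'x \<Rightarrow> 'f" assume f: "f \<in> incidence"
  have e: "inc_mult (inc_smult c f) b + inc_mult b (inc_smult c f) = inc_smult c (inc_mult f b + inc_mult b f)"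
    by (simp add: inc_mult_smult_left inc_mult_smult_right inc_smult_add)
  show "\<psi> (inc_mult (inc_smult c f) b + inc_mult b (inc_smult c f)) - jp (\<psi> (inc_smult c f)) (\<psi> b) =
        smul c (\<psi> (inc_mult f b + inc_mult b f) - jp (\<psi> f) (\<psi> b))"
    unfolding e
    by (simp add: lin_smult[OF alg lin] f incidence_add inc_mult_closed jp_smul sm_diff_r[OF alg])
qed

lemma Jstep2: assumes "z \<le> w" "a \<in> incidence"
  shows "\<psi> (inc_mult a (Eu z w) + inc_mult (Eu z w) a) = jp (\<psi> a) (\<psi> (Eu z w))"
proof -
  have "\<psi> (inc_mult a (Eu z w) + inc_mult (Eu z w) a) - jp (\<psi> a) (\<psi> (Eu z w)) = 0"
    by (rule span_zero[OF alg Jlin[OF incidence_E[OF assms(1)]] _ assms(2)])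
       (simp add: S1 assms(1))
  then show ?thesis by simp
qed

lemma Jall: assumes a: "a \<in> incidence" and b: "b \<in> incidence"
  shows "\<psi> (inc_mult a b + inc_mult b a) = jp (\<psi> a) (\<psi> b)"
proof -
  have "\<psi> (inc_mult b a + inc_mult a b) - jp (\<psi> b) (\<psi> a) = 0"
  proof (rule span_zero[OF alg Jlin[OF a] _ b])
    fix z w :: 'x assume zw: "z \<le> w"
    show "\<psi> (inc_mult (Eu z w) a + inc_mult a (Eu z w)) - jp (\<psi> (Eu z w)) (\<psi> a) = 0"
      using Jstep2[OF zw a] by (simp add: add.commute jp_comm)
  qed
  then show ?thesis by (simp add: add.commute jp_comm)
qed

lemma sqlemma: assumes a: "a \<in> incidence" shows "\<psi> (inc_mult a a) = \<psi> a * \<psi> a"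
proof -
  have h: "\<psi> (inc_mult a a + inc_mult a a) = \<psi> (inc_mult a a) + \<psi> (inc_mult a a)"
    by (rule lin_add[OF alg lin inc_mult_closed inc_mult_closed])
  have "\<psi> (inc_mult a a) + \<psi> (inc_mult a a) = \<psi> a * \<psi> a + \<psi> a * \<psi> a"
    unfolding h[symmetric] Jall[OF a a] jp_def ..
  then show ?thesis by (rule two_cancel[OF alg two])
qed

lemma jordan: "inc_jordan_hom smul \<psi>"
  unfolding inc_jordan_hom_def
proof (intro conjI ballI)
  show "inc_linear smul \<psi>" by (rule lin)
next
  fix a :: "'x \<Rightarrow> 'x \<Rightarrow> 'f" assume a: "a \<in> incidence"
  show "\<psi> (inc_mult a a) = \<psi> a * \<psi> a" by (rule sqlemma[OF a])
next
  fix a b :: "'x \<Rightarrow> 'x \<Rightarrow> 'f" assume a: "a \<in> incidence" and b: "b \<in> incidence"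
  define c where "c = inc_mult a b + inc_mult b a"
  have c: "c \<in> incidence" unfolding c_def by (intro incidence_add inc_mult_closed)
  have key: "inc_mult a c + inc_mult c a = (inc_mult (inc_mult a a) b + inc_mult b (inc_mult a a))
        + (inc_mult (inc_mult a b) a + inc_mult (inc_mult a b) a)"
    unfolding c_def by (simp add: inc_mult_add_left inc_mult_add_right inc_mult_assoc add_ac)
  have "jp (\<psi> a) (jp (\<psi> a) (\<psi> b)) = \<psi> (inc_mult a c + inc_mult c a)"
    using Jall[OF a c] Jall[OF a b] by (simp add: c_def)
  also have "\<dots> = jp (\<psi> a * \<psi> a) (\<psi> b) + (\<psi> (inc_mult (inc_mult a b) a) + \<psi> (inc_mult (inc_mult a b) a))"
  proof -
    have h2: "\<psi> ((inc_mult (inc_mult a a) b + inc_mult b (inc_mult a a)) + (inc_mult (inc_mult a b) a + inc_mult (inc_mult a b) a))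
       = \<psi> (inc_mult (inc_mult a a) b + inc_mult b (inc_mult a a)) + \<psi> (inc_mult (inc_mult a b) a + inc_mult (inc_mult a b) a)"
      by (rule lin_add[OF alg lin incidence_add[OF inc_mult_closed inc_mult_closed] incidence_add[OF inc_mult_closed inc_mult_closed]])
    have h3: "\<psi> (inc_mult (inc_mult a a) b + inc_mult b (inc_mult a a)) = jp (\<psi> a * \<psi> a) (\<psi> b)"
      unfolding Jall[OF inc_mult_closed b] sqlemma[OF a] ..
    have h4: "\<psi> (inc_mult (inc_mult a b) a + inc_mult (inc_mult a b) a) = \<psi> (inc_mult (inc_mult a b) a) + \<psi> (inc_mult (inc_mult a b) a)"
      by (rule lin_add[OF alg lin inc_mult_closed inc_mult_closed])
    show ?thesis unfolding key h2 h3 h4 ..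
  qed
  finally have "\<psi> (inc_mult (inc_mult a b) a) + \<psi> (inc_mult (inc_mult a b) a)
      = jp (\<psi> a) (jp (\<psi> a) (\<psi> b)) - jp (\<psi> a * \<psi> a) (\<psi> b)"
    by (simp add: algebra_simps)
  also have "\<dots> = \<psi> a * \<psi> b * \<psi> a + \<psi> a * \<psi> b * \<psi> a"
    by (simp add: jp_def algebra_simps)
  finally show "\<psi> (inc_mult (inc_mult a b) a) = \<psi> a * \<psi> b * \<psi> a" by (rule two_cancel[OF alg two])
qed

end




lemma inc_smult_smult: "inc_smult c (inc_smult d f) = inc_smult (c * d) f"
  by (simp add: inc_smult_def fun_eq_iff mult.assoc)

lemma idem_pow:
  fixes e :: "'x::{finite,order} \<Rightarrow> 'x \<Rightarrow> 'f::field"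
  assumes e: "e \<in> incidence" and ee: "inc_mult e e = e"
  shows "inc_pow e (Suc m) = e"
proof (induction m)
  case 0 thus ?case using inc_mult_one_right[OF e] by simp
next
  case (Suc m) thus ?case using ee by simp
qed

lemma orth_pow:
  fixes e f :: "'x::{finite,order} \<Rightarrow> 'x \<Rightarrow> 'f::field"
  assumes e: "e \<in> incidence" and f: "f \<in> incidence" and ee: "inc_mult e e = e" and ff: "inc_mult f f = f"
    and ef: "inc_mult e f = 0" and fe: "inc_mult f e = 0"
  shows "inc_pow (e + inc_smult t f) (Suc m) = e + inc_smult (t ^ Suc m) f"
proof (induction m)
  case 0
  have "e + inc_smult t f \<in> incidence" using e f by (intro incidence_add incidence_smult)
  then show ?case by (simp only: inc_pow.simps power_Suc0_right inc_mult_one_right)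
next
  case (Suc m)
  have "inc_pow (e + inc_smult t f) (Suc (Suc m)) = inc_mult (e + inc_smult t f) (inc_pow (e + inc_smult t f) (Suc m))"
    by (simp only: inc_pow.simps)
  also have "\<dots> = inc_mult (e + inc_smult t f) (e + inc_smult (t ^ Suc m) f)" unfolding Suc.IH ..
  also have "\<dots> = e + inc_smult (t ^ Suc (Suc m)) f"
    by (simp add: inc_mult_add_left inc_mult_add_right inc_mult_smult_left inc_mult_smult_right ee ff ef fe
         inc_smult_zero inc_smult_smult mult.commute)
  finally show ?case .
qed

theorem corollary7p4:
  fixes k :: nat
    and smul :: "'f::field \<Rightarrow> 'b::ring_1 \<Rightarrow> 'b"
    and \<phi> :: "('x::{finite,order} \<Rightarrow> 'x \<Rightarrow> 'f) \<Rightarrow> 'b"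
  assumes k: "k \<ge> 3"
    and root: "\<exists>\<omega>::'f. \<omega> ^ (k - 1) = 1 \<and> (\<forall>j. 0 < j \<and> j < k - 1 \<longrightarrow> \<omega> ^ j \<noteq> 1)"
    and char: "of_nat k \<noteq> (0::'f)"
    and alg: "is_F_algebra smul"
    and lin: "inc_linear smul \<phi>"
    and Pk_pres: "\<phi> ` inc_Pk k \<subseteq> Pk k"
    and one: "1 \<in> \<phi> ` incidence"
  shows "\<exists>\<psi> u. inc_jordan_hom smul \<psi> \<and>
            (\<forall>a\<in>incidence. u * \<phi> a = \<phi> a * u) \<and>
            u ^ (k - 1) = 1 \<and>
            (\<forall>a\<in>incidence. \<phi> a = u * \<psi> a)"
proof -
  obtain \<omega> :: 'f where w1: "\<omega> ^ (k - 1) = 1" and prim: "\<forall>j. 0 < j \<and> j < k - 1 \<longrightarrow> \<omega> ^ j \<noteq> 1"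
    using root by blast
  define n where "n = k - 1"
  have n2: "n \<ge> 2" and kn: "k = Suc n" using k by (auto simp: n_def)
  have cn: "of_nat n \<noteq> (0::'f)" using ofnat_ne0[OF n2] w1 prim by (simp add: n_def)
  have two: "(2::'f) \<noteq> 0"
  proof
    assume h: "(2::'f) = 0"
    have c2: "CHAR('f) dvd 2" using h of_nat_eq_0_iff_char_dvd[of 2, where 'a='f] by simp
    have "even k \<or> even n" using kn by auto
    then show False
    proof
      assume "even k" then have "CHAR('f) dvd k" using c2 dvd_trans by blast
      then show False using char of_nat_eq_0_iff_char_dvd by blast
    next
      assume "even n" then have "CHAR('f) dvd n" using c2 dvd_trans by blast
      then show False using cn of_nat_eq_0_iff_char_dvd by blast
    qed
  qed
  have Pk_mem: "\<And>a. a \<in> incidence \<Longrightarrow> inc_pow a k = a \<Longrightarrow> \<phi> a ^ k = \<phi> a"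
    using Pk_pres by (auto simp: inc_Pk_def Pk_def)
  define u where "u = \<phi> inc_one"
  have orthI: "\<phi> e * \<phi> f = 0 \<and> \<phi> f * \<phi> e = 0"
    if e: "e \<in> incidence" and f: "f \<in> incidence" and ee: "inc_mult e e = e" and ff: "inc_mult f f = f"
      and ef: "inc_mult e f = 0" and fe: "inc_mult f e = 0" for e f
  proof (rule orth[OF alg k w1 prim char])
    have "inc_pow e k = e" unfolding kn by (rule idem_pow[OF e ee])
    then show "\<phi> e ^ k = \<phi> e" by (rule Pk_mem[OF e])
    have "inc_pow f k = f" unfolding kn by (rule idem_pow[OF f ff])
    then show "\<phi> f ^ k = \<phi> f" by (rule Pk_mem[OF f])
    show "\<forall>j<k - 1. (\<phi> e + smul (\<omega> ^ j) (\<phi> f)) ^ k = \<phi> e + smul (\<omega> ^ j) (\<phi> f)"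
    proof (intro allI impI)
      fix j assume "j < k - 1"
      have tk: "(\<omega>^j)^k = \<omega>^j"
      proof -
        have "(\<omega>^j)^k = \<omega>^j * (\<omega>^n)^j" by (simp add: kn power_mult[symmetric] mult.commute power_add[symmetric])
        then show ?thesis using w1 by (simp add: n_def)
      qed
      have inc: "e + inc_smult (\<omega>^j) f \<in> incidence" using e f by (intro incidence_add incidence_smult)
      have tk': "(\<omega>^j)^(Suc n) = \<omega>^j" using tk kn by simp
      have "inc_pow (e + inc_smult (\<omega>^j) f) (Suc n) = e + inc_smult ((\<omega>^j)^(Suc n)) f"
        by (rule orth_pow[OF e f ee ff ef fe])
      then have "inc_pow (e + inc_smult (\<omega>^j) f) k = e + inc_smult (\<omega>^j) f"
        unfolding tk' kn .
      then have "\<phi> (e + inc_smult (\<omega>^j) f) ^ k = \<phi> (e + inc_smult (\<omega>^j) f)"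
        using Pk_mem[OF inc] by simp
      moreover have "\<phi> (e + inc_smult (\<omega>^j) f) = \<phi> e + smul (\<omega> ^ j) (\<phi> f)"
        using lin_add[OF alg lin e incidence_smult[OF f]] lin_smult[OF alg lin f] by simp
      ultimately show "(\<phi> e + smul (\<omega> ^ j) (\<phi> f)) ^ k = \<phi> e + smul (\<omega> ^ j) (\<phi> f)" by simp
    qed
  qed
  have uidem: "u * \<phi> e = \<phi> e * \<phi> e \<and> \<phi> e * u = \<phi> e * \<phi> e \<and> \<phi> e ^ k = \<phi> e"
    if e: "e \<in> incidence" and ee: "inc_mult e e = e" for e
  proof -
    define f where "f = inc_one - e"
    have f: "f \<in> incidence" unfolding f_def by (intro incidence_diff incidence_one e)
    have ef: "inc_mult e f = 0" unfolding f_def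
      by (simp add: inc_mult_diff_right inc_mult_one_right[OF e] ee)
    have fe: "inc_mult f e = 0" unfolding f_def
      by (simp add: inc_mult_diff_left inc_mult_one_left[OF e] ee)
    have ff: "inc_mult f f = f" unfolding f_def
      by (simp add: inc_mult_diff_left inc_mult_diff_right inc_mult_one_left inc_mult_one_right e ee incidence_one)
    have uef: "u = \<phi> e + \<phi> f"
    proof -
      have "inc_one = e + f" unfolding f_def by simp
      then show ?thesis unfolding u_def using lin_add[OF alg lin e f] by simp
    qed
    have o: "\<phi> e * \<phi> f = 0" "\<phi> f * \<phi> e = 0" using orthI[OF e f ee ff ef fe] by auto
    have r1: "u * \<phi> e = \<phi> e * \<phi> e" unfolding uef distrib_right o by simp
    have r2: "\<phi> e * u = \<phi> e * \<phi> e" unfolding uef distrib_left o by simp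
    have "inc_pow e k = e" unfolding kn by (rule idem_pow[OF e ee])
    then have r3: "\<phi> e ^ k = \<phi> e" by (rule Pk_mem[OF e])
    show ?thesis using r1 r2 r3 by blast
  qed
  have upow: "u ^ m * \<phi> e = \<phi> e ^ Suc m" if e: "e \<in> incidence" and ee: "inc_mult e e = e" for e m
  proof (induction m)
    case 0 thus ?case by simp
  next
    case (Suc m)
    have "u ^ Suc m * \<phi> e = u ^ m * (u * \<phi> e)" by (simp only: power_Suc2 mult.assoc)
    also have "\<dots> = (u ^ m * \<phi> e) * \<phi> e" using uidem[OF e ee] by (simp add: mult.assoc)
    also have "\<dots> = \<phi> e ^ Suc m * \<phi> e" unfolding Suc.IH ..
    also have "\<dots> = \<phi> e ^ Suc (Suc m)" by (rule power_Suc2[symmetric])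
    finally show ?case .
  qed
  have comm: "\<forall>a\<in>incidence. u * \<phi> a = \<phi> a * u"
  proof
    fix a :: "'x \<Rightarrow> 'x \<Rightarrow> 'f" assume a: "a \<in> incidence"
    have "u * \<phi> a - \<phi> a * u = 0"
    proof (rule span_idem_zero[OF alg lin_UV[OF alg lin] _ a])
      fix e :: "'x \<Rightarrow> 'x \<Rightarrow> 'f" assume e: "e \<in> incidence" and ee: "inc_mult e e = e"
      have "u * \<phi> e = \<phi> e * \<phi> e" "\<phi> e * u = \<phi> e * \<phi> e" using uidem[OF e ee] by auto
      then show "u * \<phi> e - \<phi> e * u = 0" by simp
    qed
    then show "u * \<phi> a = \<phi> a * u" by simp
  qed
  have un_phi: "\<forall>a\<in>incidence. u ^ n * \<phi> a = \<phi> a"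
  proof
    fix a :: "'x \<Rightarrow> 'x \<Rightarrow> 'f" assume a: "a \<in> incidence"
    have "u ^ n * \<phi> a - \<phi> a * 1 = 0"
    proof (rule span_idem_zero[OF alg lin_UV[OF alg lin] _ a])
      fix e :: "'x \<Rightarrow> 'x \<Rightarrow> 'f" assume e: "e \<in> incidence" and ee: "inc_mult e e = e"
      have a1: "u ^ n * \<phi> e = \<phi> e ^ Suc n" by (rule upow[OF e ee])
      have a2: "\<phi> e ^ Suc n = \<phi> e" using uidem[OF e ee] unfolding kn by blast
      show "u ^ n * \<phi> e - \<phi> e * 1 = 0" using a1 a2 by simp
    qed
    then show "u ^ n * \<phi> a = \<phi> a" by simp
  qed
  have un: "u ^ n = 1"
  proof -
    obtain a0 where a0: "a0 \<in> incidence" "\<phi> a0 = 1" using one by auto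
    have "u ^ n * \<phi> a0 = \<phi> a0" using un_phi a0(1) by blast
    then show ?thesis using a0(2) by simp
  qed
  define \<psi> where "\<psi> = (\<lambda>a. u ^ (n - 1) * \<phi> a)"
  have psilin: "inc_linear smul \<psi>"
  proof -
    have eq: "\<psi> = (\<lambda>a. u ^ (n - 1) * \<phi> a - \<phi> a * 0)" unfolding \<psi>_def by simp
    show ?thesis unfolding eq by (rule lin_UV[OF alg lin])
  qed
  have psiidem: "\<forall>e\<in>incidence. inc_mult e e = e \<longrightarrow> \<psi> e * \<psi> e = \<psi> e"
  proof (intro ballI impI)
    fix e :: "'x \<Rightarrow> 'x \<Rightarrow> 'f" assume e: "e \<in> incidence" and ee: "inc_mult e e = e"
    have pe: "\<psi> e = \<phi> e ^ n" unfolding \<psi>_def using upow[OF e ee, of "n - 1"] n2 by simp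
    have pk: "\<phi> e ^ Suc n = \<phi> e" using uidem[OF e ee] kn by simp
    have ar: "n + n = Suc n + (n - 1)" using n2 by arith
    have "\<phi> e ^ n * \<phi> e ^ n = \<phi> e ^ (Suc n + (n - 1))" by (simp only: power_add[symmetric] ar)
    also have "\<dots> = \<phi> e ^ Suc (n - 1)" by (simp only: power_add pk power_Suc[symmetric])
    also have "\<dots> = \<phi> e ^ n" using n2 by simp
    finally show "\<psi> e * \<psi> e = \<psi> e" using pe by simp
  qed
  have J: "inc_jordan_hom smul \<psi>" by (rule jordan[OF alg two psilin psiidem])
  have fact: "\<forall>a\<in>incidence. \<phi> a = u * \<psi> a"
  proof
    fix a :: "'x \<Rightarrow> 'x \<Rightarrow> 'f" assume a: "a \<in> incidence"
    have s: "Suc (n - 1) = n" using n2 by simp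
    have "u * \<psi> a = u ^ n * \<phi> a" unfolding \<psi>_def
      by (simp only: mult.assoc[symmetric] power_Suc[symmetric] s)
    then show "\<phi> a = u * \<psi> a" using un_phi a by simp
  qed
  have uk: "u ^ (k - 1) = 1" using un by (simp add: n_def)
  show ?thesis using J comm uk fact by blast
qed


end
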